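(* Let $\mathcal{H}$ be a separable Hilbert space with orthonormal basis $\{|n\rangle : n\in\mathbb{N}_0=\{0,1,2,\dots\}\}$. Let $\mathsf{N}$ be the number observable on $\mathbb{N}_0$, $\mathsf{N}(\{n\})=|n\rangle\langle n|$, and let $\Phi$ be the canonical phase observable on $[0,2\pi)$, $$\Phi(X)=\sum_{m,n=0}^\infty\frac{1}{2\pi}\int_X e^{i(m-n)\theta}\,d\theta\,|m\rangle\langle n|$$ for Borel sets $X\subseteq[0,2\pi)$ (series converging weakly). Then $\mathsf{N}$ and $\Phi$ are maximally incompatible, i.e. $J(\Phi,\mathsf{N})=\{(\lambda,\mu)\in[0,1]^2:\lambda+\mu\leq 1\}$.
   Context: An observable on a Hilbert space $\mathcal{H}$ with outcome space $\Omega$ (a Borel subset of some $\mathbb{R}^n$) is a normalized positive operator valued measure (POVM) on the Borel sets of $\Omega$. An observable $\mathsf{T}$ is trivial if $\mathsf{T}(X)=\mu(X)I$ for some probability measure $\mu$. Two observables $\mathsf{M}_1,\mathsf{M}_2$ with outcome spaces $\Omega_1,\Omega_2$ are jointly measurable if there is an observable $\mathsf{M}$ on $\Omega_1\times\Omega_2$ with $\mathsf{M}(X\times\Omega_2)=\mathsf{M}_1(X)$ and $\mathsf{M}(\Omega_1\times Y)=\mathsf{M}_2(Y)$ for all Borel $X,Y$. The joint measurability region $J(\mathsf{M}_1,\mathsf{M}_2)$ is the set of $(\lambda,\mu)\in[0,1]\times[0,1]$ for which there exist trivial observables $\mathsf{T}_1$ on $\Omega_1$ and $\mathsf{T}_2$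 on $\Omega_2$ such that $\lambda\mathsf{M}_1+(1-\lambda)\mathsf{T}_1$ and $\mu\mathsf{M}_2+(1-\mu)\mathsf{T}_2$ are jointly measurable. A pair is maximally incompatible if its joint measurability region equals $\{(\lambda,\mu)\in[0,1]^2:\lambda+\mu\leq1\}$ (this condition is symmetric in the two observables). *)

theory Defs
  imports "HOL-Probability.Probability"
begin

text \<open>The Hilbert space is l2(N0) with orthonormal basis |n>, n::nat.
  A bounded operator A is represented by its matrix entries A m n = <m|A|n>.
  Finitely supported vectors are pairs (K, psi) with psi n irrelevant for n >= K.\<close>

type_synonym mat = "nat \<Rightarrow> nat \<Rightarrow> complex"

definition qform :: "nat \<Rightarrow> (nat \<Rightarrow> complex) \<Rightarrow> mat \<Rightarrow> complex" where
  "qform K \<psi> A = (\<Sum>m<K. \<Sum>n<K. cnj (\<psi> m) * A m n * \<psi> n)"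

definition idmat :: mat where
  "idmat = (\<lambda>m n. if m = n then 1 else 0)"

text \<open>A normalized POVM on the measurable space M: for every (finitely supported)
  vector psi, X \<mapsto> <psi|T(X)psi> is a (real, nonnegative) countably additive measure
  on the sets of M, and T(Omega) = I.\<close>

definition is_observable :: "'a measure \<Rightarrow> ('a set \<Rightarrow> mat) \<Rightarrow> bool" where
  "is_observable M T \<longleftrightarrow>
     (\<forall>K \<psi>. (\<forall>X\<in>sets M. qform K \<psi> (T X) \<in> \<real> \<and> 0 \<le> Re (qform K \<psi> (T X)))
        \<and> countably_additive (sets M) (\<lambda>X. ennreal (Re (qform K \<psi> (T X))))
        \<and> T (space M) = idmat)"

definition trivial_observable :: "'a measure \<Rightarrow> ('a set \<Rightarrow> mat) \<Rightarrow> bool" where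
  "trivial_observable M T \<longleftrightarrow> is_observable M T \<and>
     (\<exists>\<mu>. prob_space \<mu> \<and> sets \<mu> = sets M \<and>
        (\<forall>X\<in>sets M. T X = (\<lambda>m n. complex_of_real (measure \<mu> X) * idmat m n)))"

definition jointly_measurable ::
    "'a measure \<Rightarrow> 'b measure \<Rightarrow> ('a set \<Rightarrow> mat) \<Rightarrow> ('b set \<Rightarrow> mat) \<Rightarrow> bool" where
  "jointly_measurable M1 M2 A B \<longleftrightarrow>
     (\<exists>G. is_observable (M1 \<Otimes>\<^sub>M M2) G \<and>
        (\<forall>X\<in>sets M1. G (X \<times> space M2) = A X) \<and>
        (\<forall>Y\<in>sets M2. G (space M1 \<times> Y) = B Y))"

definition mix :: "real \<Rightarrow> ('a set \<Rightarrow> mat) \<Rightarrow> ('a set \<Rightarrow> mat) \<Rightarrow> ('a set \<Rightarrow> mat)" where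
  "mix l A T = (\<lambda>X m n. complex_of_real l * A X m n + complex_of_real (1 - l) * T X m n)"

definition jm_region ::
    "'a measure \<Rightarrow> 'b measure \<Rightarrow> ('a set \<Rightarrow> mat) \<Rightarrow> ('b set \<Rightarrow> mat) \<Rightarrow> (real \<times> real) set" where
  "jm_region M1 M2 A B = {(l, u). l \<in> {0..1} \<and> u \<in> {0..1} \<and>
     (\<exists>T1 T2. trivial_observable M1 T1 \<and> trivial_observable M2 T2 \<and>
        jointly_measurable M1 M2 (mix l A T1) (mix u B T2))}"

definition maximally_incompatible ::
    "'a measure \<Rightarrow> 'b measure \<Rightarrow> ('a set \<Rightarrow> mat) \<Rightarrow> ('b set \<Rightarrow> mat) \<Rightarrow> bool" where
  "maximally_incompatible M1 M2 A B \<longleftrightarrow>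
     jm_region M1 M2 A B = {(l, u). l \<in> {0..1} \<and> u \<in> {0..1} \<and> l + u \<le> 1}"

definition phase_space :: "real measure" where
  "phase_space = restrict_space borel {0..<2*pi}"

definition number_space :: "nat measure" where
  "number_space = count_space UNIV"

definition number_obs :: "nat set \<Rightarrow> mat" where
  "number_obs X = (\<lambda>m n. if m = n \<and> m \<in> X then 1 else 0)"

definition canonical_phase :: "real set \<Rightarrow> mat" where
  "canonical_phase X = (\<lambda>m n. complex_of_real (1 / (2*pi)) *
      (LINT \<theta>:X|lborel. cis ((real m - real n) * \<theta>)))"

end

theory Submission
  imports Defs
begin

lemma qform_add: "qform K \<psi> (\<lambda>m n. A m n + B m n) = qform K \<psi> A + qform K \<psi> B"
  unfolding qform_def by (simp add: algebra_simps sum.distrib)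

lemma qform_scale: "qform K \<psi> (\<lambda>m n. c * A m n) = c * qform K \<psi> A"
  unfolding qform_def by (simp add: algebra_simps sum_distrib_left)

lemma normsq_eq: "complex_of_real ((cmod z)\<^sup>2) = cnj z * z"
  using complex_norm_square[of z] by (simp add: mult.commute)

lemma qform_diag: "qform K \<psi> (\<lambda>m n. if m = n then d m else 0) = (\<Sum>m<K. of_real ((cmod (\<psi> m))\<^sup>2) * d m)"
proof -
  have "qform K \<psi> (\<lambda>m n. if m = n then d m else 0) = (\<Sum>m<K. \<Sum>n<K. if m = n then cnj (\<psi> m) * d m * \<psi> m else 0)"
    unfolding qform_def by (intro sum.cong refl) auto
  also have "\<dots> = (\<Sum>m<K. cnj (\<psi> m) * d m * \<psi> m)"
    by (intro sum.cong refl) simp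
  also have "\<dots> = (\<Sum>m<K. of_real ((cmod (\<psi> m))\<^sup>2) * d m)"
    by (intro sum.cong refl) (simp only: normsq_eq mult.commute mult.left_commute)
  finally show ?thesis .
qed

lemma qform_idmat: "qform K \<psi> idmat = of_real (\<Sum>n<K. (cmod (\<psi> n))\<^sup>2)"
  using qform_diag[of K \<psi> "\<lambda>_. 1"] unfolding idmat_def by simp

lemma qform_number: "qform K \<psi> (number_obs Y) = of_real (\<Sum>n\<in>{..<K} \<inter> Y. (cmod (\<psi> n))\<^sup>2)"
proof -
  have "number_obs Y = (\<lambda>m n. if m = n then (if m \<in> Y then 1 else 0) else 0)"
    unfolding number_obs_def by auto
  then have "qform K \<psi> (number_obs Y) = (\<Sum>m<K. of_real ((cmod (\<psi> m))\<^sup>2) * (if m \<in> Y then 1 else 0))"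
    using qform_diag by simp
  also have "\<dots> = (\<Sum>m<K. if m \<in> Y then of_real ((cmod (\<psi> m))\<^sup>2) else 0)"
    by (intro sum.cong refl) simp
  also have "\<dots> = (\<Sum>m\<in>{..<K} \<inter> Y. complex_of_real ((cmod (\<psi> m))\<^sup>2))"
    by (rule sum.inter_restrict[symmetric]) simp
  also have "\<dots> = of_real (\<Sum>m\<in>{..<K} \<inter> Y. (cmod (\<psi> m))\<^sup>2)"
    by (rule of_real_sum[symmetric])
  finally show ?thesis .
qed

lemma ca_empty_zero:
  fixes f :: "'a set \<Rightarrow> real"
  assumes ca: "countably_additive M (\<lambda>X. ennreal (f X))" and e: "{} \<in> M" and nn: "f {} \<ge> 0"
  shows "f {} = 0"
proof -
  have "(\<Sum>i. ennreal (f ((\<lambda>_. {}) i))) = ennreal (f (\<Union>(range (\<lambda>_::nat. {}))))"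
    using ca e unfolding countably_additive_def by (auto simp: disjoint_family_on_def)
  then have eq: "(\<Sum>i::nat. ennreal (f {})) = ennreal (f {})" by simp
  have "(\<Sum>i<2::nat. ennreal (f {})) \<le> (\<Sum>i::nat. ennreal (f {}))"
    by (rule sum_le_suminf) auto
  then have "2 * ennreal (f {}) \<le> ennreal (f {})" using eq by simp
  then have "ennreal (2 * f {}) \<le> ennreal (f {})" using nn by (simp add: ennreal_mult)
  then have "2 * f {} \<le> f {}" using nn by (simp add: ennreal_le_iff2)
  then show ?thesis using nn by simp
qed

lemma obs_props:
  assumes "is_observable M T" "X \<in> sets M"
  shows "qform K \<psi> (T X) = of_real (Re (qform K \<psi> (T X)))" "Re (qform K \<psi> (T X)) \<ge> 0"
  using assms unfolding is_observable_def by (auto simp: Reals_def)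

lemma obs_space: "is_observable M T \<Longrightarrow> T (space M) = idmat"
  unfolding is_observable_def by auto

lemma obs_empty:
  assumes "is_observable M T"
  shows "Re (qform K \<psi> (T {})) = 0"
proof -
  have ca: "countably_additive (sets M) (\<lambda>X. ennreal (Re (qform K \<psi> (T X))))"
    using assms unfolding is_observable_def by auto
  show ?thesis
    by (rule ca_empty_zero[OF ca]) (auto intro: obs_props[OF assms])
qed

lemma obs_add:
  assumes obs: "is_observable M T" and X: "X \<in> sets M" and Y: "Y \<in> sets M" and d: "X \<inter> Y = {}"
  shows "Re (qform K \<psi> (T (X \<union> Y))) = Re (qform K \<psi> (T X)) + Re (qform K \<psi> (T Y))"
proof -
  let ?f = "\<lambda>X. ennreal (Re (qform K \<psi> (T X)))"
  have ca: "countably_additive (sets M) ?f"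
    using obs unfolding is_observable_def by auto
  have pos: "positive (sets M) ?f"
    unfolding positive_def using obs_empty[OF obs] by simp
  have "additive (sets M) ?f"
    by (rule sets.countably_additive_additive[OF pos ca])
  then have "?f (X \<union> Y) = ?f X + ?f Y"
    using X Y d unfolding additive_def by auto
  then show ?thesis
    using obs_props(2)[OF obs X, of K \<psi>] obs_props(2)[OF obs Y, of K \<psi>]
      obs_props(2)[OF obs sets.Un[OF X Y], of K \<psi>]
    by (simp add: ennreal_plus[symmetric] del: ennreal_plus)
qed

lemma discr:
  fixes a b c :: real
  assumes h: "\<And>t. 0 \<le> a + b * t + c * t\<^sup>2" and a: "0 \<le> a" and c: "0 \<le> c"
  shows "b \<le> 2 * sqrt a * sqrt c"
proof -
  have "b\<^sup>2 \<le> 4 * a * c"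
  proof (cases "c = 0")
    case True
    show ?thesis
    proof (rule ccontr)
      assume "\<not> ?thesis"
      then have "b \<noteq> 0" using True by simp
      have "0 \<le> a + b * (- (a + 1) / b)" using h[of "- (a+1)/b"] True by simp
      also have "\<dots> = -1" using \<open>b \<noteq> 0\<close> by (simp add: field_simps)
      finally show False by simp
    qed
  next
    case False
    then have cp: "c > 0" using c by simp
    have "0 \<le> a + b * (- b / (2*c)) + c * (- b / (2*c))\<^sup>2" by (rule h)
    also have "\<dots> = a - b\<^sup>2 / (4 * c)" using cp by (simp add: field_simps power2_eq_square)
    finally have "b\<^sup>2 / (4*c) \<le> a" by simp
    then show ?thesis using cp by (simp add: field_simps)
  qed
  then have "sqrt (b\<^sup>2) \<le> sqrt (4 * a * c)" by (rule real_sqrt_le_mono)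
  moreover have "sqrt (4 * a * c) = 2 * sqrt a * sqrt c"
    by (simp add: real_sqrt_mult)
  moreover have "b \<le> sqrt (b\<^sup>2)" by simp
  ultimately show ?thesis by linarith
qed

definition sform :: "nat \<Rightarrow> (nat \<Rightarrow> complex) \<Rightarrow> (nat \<Rightarrow> complex) \<Rightarrow> mat \<Rightarrow> complex" where
  "sform K x y E = (\<Sum>m<K. \<Sum>n<K. cnj (x m) * E m n * y n)"

lemma qform_expand:
  "qform K (\<lambda>n. x n + of_real t * y n) E =
     qform K x E + of_real t * (sform K x y E + sform K y x E) + of_real (t\<^sup>2) * qform K y E"
  unfolding qform_def sform_def
  by (simp add: algebra_simps sum.distrib sum_distrib_left power2_eq_square)

lemma qform_triangle:
  assumes pos: "\<And>\<phi>. 0 \<le> Re (qform K \<phi> E)"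
  shows "Re (qform K (\<lambda>n. x n + y n) E) \<le> (sqrt (Re (qform K x E)) + sqrt (Re (qform K y E)))\<^sup>2"
proof -
  let ?a = "Re (qform K x E)" and ?c = "Re (qform K y E)"
  let ?b = "Re (sform K x y E + sform K y x E)"
  have h: "0 \<le> ?a + ?b * t + ?c * t\<^sup>2" for t
    using pos[of "\<lambda>n. x n + of_real t * y n"] unfolding qform_expand
    by (simp add: mult.commute)
  have b: "?b \<le> 2 * sqrt ?a * sqrt ?c"
    by (rule discr[OF h pos pos])
  have "Re (qform K (\<lambda>n. x n + y n) E) = ?a + ?b * 1 + ?c * 1\<^sup>2"
    using qform_expand[of K x 1 y E] by simp
  also have "\<dots> \<le> ?a + 2 * sqrt ?a * sqrt ?c + ?c" using b by simp
  also have "\<dots> = (sqrt ?a + sqrt ?c)\<^sup>2"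
    using pos[of x] pos[of y] by (simp add: power2_eq_square algebra_simps)
  finally show ?thesis .
qed

lemma set_integral_sum':
  fixes f :: "'i \<Rightarrow> 'a \<Rightarrow> 'b::{banach, second_countable_topology}"
  assumes "finite I" "\<And>i. i \<in> I \<Longrightarrow> set_integrable M A (f i)"
  shows "(LINT x:A|M. (\<Sum>i\<in>I. f i x)) = (\<Sum>i\<in>I. LINT x:A|M. f i x)"
  using assms unfolding set_lebesgue_integral_def set_integrable_def
  by (simp only: scaleR_sum_right Bochner_Integration.integral_sum[where f="\<lambda>i x. indicator A x *\<^sub>R f i x"])

lemma set_integrable_sum':
  fixes f :: "'i \<Rightarrow> 'a \<Rightarrow> 'b::{banach, second_countable_topology}"
  assumes "finite I" "\<And>i. i \<in> I \<Longrightarrow> set_integrable M A (f i)"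
  shows "set_integrable M A (\<lambda>x. \<Sum>i\<in>I. f i x)"
  using assms unfolding set_integrable_def
  by (simp only: scaleR_sum_right Bochner_Integration.integrable_sum[where f="\<lambda>i x. indicator A x *\<^sub>R f i x"])

definition pfun :: "nat \<Rightarrow> (nat \<Rightarrow> complex) \<Rightarrow> real \<Rightarrow> complex" where
  "pfun K \<psi> \<theta> = (\<Sum>n<K. \<psi> n * cis (- (real n * \<theta>)))"

lemma cont_integrable:
  fixes g :: "real \<Rightarrow> 'b::{banach, second_countable_topology}"
  assumes "continuous_on UNIV g" "X \<in> sets borel" "X \<subseteq> {0..2*pi}"
  shows "set_integrable lborel X g"
  by (rule set_integrable_subset[OF borel_integrable_atLeastAtMost'])
     (use assms in \<open>auto intro: continuous_on_subset\<close>)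

lemma phase_qform:
  assumes X: "X \<in> sets borel" "X \<subseteq> {0..2*pi}"
  shows "qform K \<psi> (canonical_phase X) =
     of_real (LINT \<theta>:X|lborel. (1/(2*pi)) * (cmod (pfun K \<psi> \<theta>))\<^sup>2)"
proof -
  let ?c = "complex_of_real (1/(2*pi))"
  have int: "set_integrable lborel X (\<lambda>\<theta>. cnj (\<psi> m) * cis ((real m - real n) * \<theta>) * \<psi> n)" for m n
    by (rule cont_integrable[OF _ X]) (intro continuous_intros)
  have "qform K \<psi> (canonical_phase X) =
      ?c * (\<Sum>m<K. \<Sum>n<K. LINT \<theta>:X|lborel. cnj (\<psi> m) * cis ((real m - real n) * \<theta>) * \<psi> n)"
    unfolding qform_def canonical_phase_def
    by (simp add: sum_distrib_left mult.commute mult.left_commute)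
  also have "\<dots> = ?c * (LINT \<theta>:X|lborel. (\<Sum>m<K. \<Sum>n<K. cnj (\<psi> m) * cis ((real m - real n) * \<theta>) * \<psi> n))"
    by (subst set_integral_sum', simp, rule set_integrable_sum', simp, rule int)
       (subst set_integral_sum', auto intro: int)
  also have "\<dots> = ?c * (LINT \<theta>:X|lborel. of_real ((cmod (pfun K \<psi> \<theta>))\<^sup>2))"
  proof -
    have "(\<Sum>m<K. \<Sum>n<K. cnj (\<psi> m) * cis ((real m - real n) * \<theta>) * \<psi> n) = of_real ((cmod (pfun K \<psi> \<theta>))\<^sup>2)" for \<theta>
    proof -
      have "of_real ((cmod (pfun K \<psi> \<theta>))\<^sup>2) = cnj (pfun K \<psi> \<theta>) * pfun K \<psi> \<theta>"
        using complex_norm_square[of "pfun K \<psi> \<theta>"] by (simp add: mult.commute)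
      also have "\<dots> = (\<Sum>m<K. \<Sum>n<K. cnj (\<psi> m * cis (- (real m * \<theta>))) * (\<psi> n * cis (- (real n * \<theta>))))"
        unfolding pfun_def cnj_sum sum_distrib_right sum_distrib_left by (rule sum.swap)
      also have "\<dots> = (\<Sum>m<K. \<Sum>n<K. cnj (\<psi> m) * cis ((real m - real n) * \<theta>) * \<psi> n)"
        by (intro sum.cong refl) (simp add: cis_cnj cis_mult algebra_simps)
      finally show ?thesis by simp
    qed
    then show ?thesis by simp
  qed
  also have "\<dots> = ?c * of_real (LINT \<theta>:X|lborel. (cmod (pfun K \<psi> \<theta>))\<^sup>2)"
    by (simp only: set_integral_complex_of_real)
  also have "\<dots> = of_real (LINT \<theta>:X|lborel. (1/(2*pi)) * (cmod (pfun K \<psi> \<theta>))\<^sup>2)"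
    by simp
  finally show ?thesis .
qed

lemma cis_FTC:
  fixes d :: real
  assumes d: "d \<noteq> 0"
  shows "(LINT \<theta>:{0..<2*pi}|lborel. cis (d * \<theta>)) = (cis (d * (2*pi)) - 1) / (\<i> * of_real d)"
proof -
  let ?F = "\<lambda>\<theta>. cis (d * \<theta>) / (\<i> * of_real d)"
  have "(LBINT \<theta>=(0::real)..2*pi. cis (d * \<theta>)) = ?F (2*pi) - ?F 0"
  proof (rule interval_integral_FTC_finite)
    show "continuous_on {min 0 (2*pi)..max 0 (2*pi)} (\<lambda>\<theta>. cis (d * \<theta>))"
      by (intro continuous_intros)
    fix x
    show "(?F has_vector_derivative cis (d * x)) (at x within {min 0 (2*pi)..max 0 (2*pi)})"
      unfolding has_vector_derivative_def
      using d by (auto intro!: derivative_eq_intros simp: field_simps scaleR_conv_of_real)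
  qed
  then show ?thesis
    by (simp add: interval_integral_Ico diff_divide_distrib)
qed

lemma space_phase: "space phase_space = {0..<2*pi}"
  unfolding phase_space_def by (simp add: space_restrict_space)

lemma sets_phase: "X \<in> sets phase_space \<longleftrightarrow> X \<in> sets borel \<and> X \<subseteq> {0..<2*pi}"
  unfolding phase_space_def by (subst sets_restrict_space_iff) auto

lemma set_integral_ennreal:
  fixes h :: "'a \<Rightarrow> real"
  assumes "set_integrable M X h" "\<And>x. 0 \<le> h x"
  shows "ennreal (LINT x:X|M. h x) = (\<integral>\<^sup>+ x. ennreal (h x) * indicator X x \<partial>M)"
proof -
  have "(\<integral>\<^sup>+ x. ennreal (indicator X x *\<^sub>R h x) \<partial>M) = integral\<^sup>L M (\<lambda>x. indicator X x *\<^sub>R h x)"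
    using assms unfolding set_integrable_def by (intro nn_integral_eq_integral) auto
  moreover have "(\<lambda>x. ennreal (indicator X x *\<^sub>R h x)) = (\<lambda>x. ennreal (h x) * indicator X x)"
    by (auto simp: indicator_def)
  ultimately show ?thesis unfolding set_lebesgue_integral_def by simp
qed

definition phdens :: "nat \<Rightarrow> (nat \<Rightarrow> complex) \<Rightarrow> real \<Rightarrow> real" where
  "phdens K \<psi> \<theta> = (1/(2*pi)) * (cmod (pfun K \<psi> \<theta>))\<^sup>2"

lemma phdens_nonneg: "0 \<le> phdens K \<psi> \<theta>"
  unfolding phdens_def by simp

lemma phdens_cont: "continuous_on UNIV (phdens K \<psi>)"
  unfolding phdens_def pfun_def by (intro continuous_intros)

lemma phdens_meas: "phdens K \<psi> \<in> borel_measurable borel"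
  using phdens_cont by (rule borel_measurable_continuous_onI)

lemma phdens_int: "X \<in> sets phase_space \<Longrightarrow> set_integrable lborel X (phdens K \<psi>)"
  unfolding sets_phase by (intro cont_integrable[OF phdens_cont]) auto

lemma phase_qform':
  "X \<in> sets phase_space \<Longrightarrow> qform K \<psi> (canonical_phase X) = of_real (LINT \<theta>:X|lborel. phdens K \<psi> \<theta>)"
  unfolding sets_phase phdens_def by (intro phase_qform) auto

lemma phase_space_idmat: "canonical_phase (space phase_space) = idmat"
proof (intro ext)
  fix m n :: nat
  show "canonical_phase (space phase_space) m n = idmat m n"
  proof (cases "m = n")
    case True
    have "(LINT \<theta>:{0..<2*pi}|lborel. cis (0 * \<theta>)) = of_real (2*pi)"
    proof -
      have "(LINT \<theta>:{0..<2*pi}|lborel. cis (0 * \<theta>)) = (LINT \<theta>:{0..<2*pi}|lborel. (1::complex))"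
        by simp
      also have "\<dots> = measure lborel {0..<2*pi} *\<^sub>R 1"
        by (rule set_integral_const) auto
      finally show ?thesis by (simp add: scaleR_conv_of_real)
    qed
    then show ?thesis using True unfolding canonical_phase_def idmat_def space_phase by simp
  next
    case False
    let ?d = "real m - real n"
    have d: "?d \<noteq> 0" using False by simp
    have "cis (?d * (2*pi)) = cis (2 * pi * of_int (int m - int n))"
      by (simp add: algebra_simps)
    also have "\<dots> = 1" by (rule cis_multiple_2pi) simp
    finally have "(LINT \<theta>:{0..<2*pi}|lborel. cis (?d * \<theta>)) = 0"
      using cis_FTC[OF d] by simp
    then show ?thesis using False unfolding canonical_phase_def idmat_def space_phase by simp
  qed
qed

lemma phase_observable: "is_observable phase_space canonical_phase"
  unfolding is_observable_def
proof (intro allI conjI ballI)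
  fix K \<psi> X
  assume X: "X \<in> sets phase_space"
  show "qform K \<psi> (canonical_phase X) \<in> \<real>"
    using phase_qform'[OF X] by simp
  show "0 \<le> Re (qform K \<psi> (canonical_phase X))"
    using phase_qform'[OF X] unfolding set_lebesgue_integral_def
    by (simp add: Bochner_Integration.integral_nonneg phdens_nonneg)
next
  fix K \<psi>
  show "canonical_phase (space phase_space) = idmat" by (rule phase_space_idmat)
  let ?N = "density lborel (\<lambda>\<theta>. ennreal (phdens K \<psi> \<theta>))"
  have eq: "ennreal (Re (qform K \<psi> (canonical_phase X))) = emeasure ?N X" if X: "X \<in> sets phase_space" for X
  proof -
    have Xb: "X \<in> sets borel" using X sets_phase by auto
    have "ennreal (Re (qform K \<psi> (canonical_phase X))) = ennreal (LINT \<theta>:X|lborel. phdens K \<psi> \<theta>)"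
      using phase_qform'[OF X] by simp
    also have "\<dots> = (\<integral>\<^sup>+ x. ennreal (phdens K \<psi> x) * indicator X x \<partial>lborel)"
      by (rule set_integral_ennreal[OF phdens_int[OF X] phdens_nonneg])
    also have "\<dots> = emeasure ?N X"
      using Xb phdens_meas by (subst emeasure_density) auto
    finally show ?thesis .
  qed
  have "countably_additive (sets ?N) (emeasure ?N)" by (rule emeasure_countably_additive)
  then have ca: "countably_additive (sets phase_space) (emeasure ?N)"
    unfolding countably_additive_def using sets_phase by auto
  show "countably_additive (sets phase_space) (\<lambda>X. ennreal (Re (qform K \<psi> (canonical_phase X))))"
    unfolding countably_additive_def
  proof (intro allI impI)
    fix A :: "nat \<Rightarrow> real set"
    assume A: "range A \<subseteq> sets phase_space" "disjoint_family A" "\<Union> (range A) \<in> sets phase_space"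
    then show "(\<Sum>i. ennreal (Re (qform K \<psi> (canonical_phase (A i))))) =
        ennreal (Re (qform K \<psi> (canonical_phase (\<Union> (range A)))))"
      using ca unfolding countably_additive_def by (simp add: eq subset_eq)
  qed
qed

lemma CA_add:
  fixes f g :: "'a set \<Rightarrow> ennreal"
  assumes "countably_additive M f" "countably_additive M g"
  shows "countably_additive M (\<lambda>X. f X + g X)"
  unfolding countably_additive_def
proof (intro allI impI)
  fix A :: "nat \<Rightarrow> 'a set"
  assume A: "range A \<subseteq> M" "disjoint_family A" "\<Union> (range A) \<in> M"
  have "(\<Sum>i. f (A i) + g (A i)) = (\<Sum>i. f (A i)) + (\<Sum>i. g (A i))"
    by (rule suminf_add[symmetric]) (rule summableI)+
  also have "\<dots> = f (\<Union> (range A)) + g (\<Union> (range A))"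
    using assms A unfolding countably_additive_def by simp
  finally show "(\<Sum>i. f (A i) + g (A i)) = f (\<Union> (range A)) + g (\<Union> (range A))" .
qed

lemma CA_cmult:
  fixes f :: "'a set \<Rightarrow> ennreal"
  assumes "countably_additive M f"
  shows "countably_additive M (\<lambda>X. c * f X)"
  using assms unfolding countably_additive_def by (simp add: ennreal_suminf_cmult)

lemma CA_zero: "countably_additive M (\<lambda>X. 0::ennreal)"
  unfolding countably_additive_def by simp

lemma CA_sum:
  fixes f :: "'i \<Rightarrow> 'a set \<Rightarrow> ennreal"
  assumes "finite I" "\<And>i. i \<in> I \<Longrightarrow> countably_additive M (f i)"
  shows "countably_additive M (\<lambda>X. \<Sum>i\<in>I. f i X)"
  using assms
proof (induction I rule: finite_induct)
  case empty
  then show ?case using CA_zero by simp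
next
  case (insert i I)
  then show ?case by (simp add: CA_add)
qed

lemma CA_vimage:
  assumes ca: "countably_additive (sets M) f" and g: "g \<in> measurable M N"
  shows "countably_additive (sets N) (\<lambda>X. f (g -` X \<inter> space M))"
  unfolding countably_additive_def
proof (intro allI impI)
  fix A :: "nat \<Rightarrow> _"
  assume A: "range A \<subseteq> sets N" "disjoint_family A" "\<Union> (range A) \<in> sets N"
  let ?B = "\<lambda>i. g -` A i \<inter> space M"
  have r: "range ?B \<subseteq> sets M" using A(1) measurable_sets[OF g] by blast
  have d: "disjoint_family ?B" using A(2) unfolding disjoint_family_on_def by auto
  have u: "\<Union> (range ?B) = g -` \<Union> (range A) \<inter> space M" by auto
  have um: "\<Union> (range ?B) \<in> sets M" unfolding u using measurable_sets[OF g A(3)] .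
  have "(\<Sum>i. f (?B i)) = f (\<Union> (range ?B))"
    using ca r d um unfolding countably_additive_def by simp
  then show "(\<Sum>i. f (?B i)) = f (g -` \<Union> (range A) \<inter> space M)"
    unfolding u .
qed

lemma CA_restrict:
  assumes "countably_additive M f" "M' \<subseteq> M"
  shows "countably_additive M' f"
  using assms unfolding countably_additive_def
  by (metis (no_types, lifting) subset_trans subsetD)

lemma trivial_obs:
  assumes P: "prob_space \<mu>" and S: "sets \<mu> = sets M"
  shows "trivial_observable M (\<lambda>X m n. of_real (measure \<mu> X) * idmat m n)"
  unfolding trivial_observable_def
proof (intro conjI exI ballI)
  show "prob_space \<mu>" "sets \<mu> = sets M" by fact+
  show "(\<lambda>m n. of_real (measure \<mu> X) * idmat m n) = (\<lambda>m n. of_real (measure \<mu> X) * idmat m n)" for X by simp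
  show "is_observable M (\<lambda>X m n. of_real (measure \<mu> X) * idmat m n)"
    unfolding is_observable_def
  proof (intro allI conjI ballI)
    fix K :: nat and \<psi> :: "nat \<Rightarrow> complex" and X
    let ?ns = "\<Sum>n<K. (cmod (\<psi> n))\<^sup>2"
    have q: "qform K \<psi> (\<lambda>m n. of_real (measure \<mu> X) * idmat m n) = of_real (measure \<mu> X * ?ns)" for X
      by (simp add: qform_scale qform_idmat)
    show "qform K \<psi> (\<lambda>m n. of_real (measure \<mu> X) * idmat m n) \<in> \<real>" by (simp add: q)
    show "0 \<le> Re (qform K \<psi> (\<lambda>m n. of_real (measure \<mu> X) * idmat m n))"
      by (simp add: q sum_nonneg)
    show "countably_additive (sets M) (\<lambda>X. ennreal (Re (qform K \<psi> (\<lambda>m n. of_real (measure \<mu> X) * idmat m n))))"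
    proof -
      have e: "ennreal (Re (qform K \<psi> (\<lambda>m n. of_real (measure \<mu> X) * idmat m n))) = ennreal ?ns * emeasure \<mu> X" for X
      proof -
        have "ennreal (Re (qform K \<psi> (\<lambda>m n. of_real (measure \<mu> X) * idmat m n))) = ennreal (measure \<mu> X * ?ns)"
          by (simp only: q Re_complex_of_real)
        also have "\<dots> = ennreal ?ns * ennreal (measure \<mu> X)"
          by (simp add: ennreal_mult sum_nonneg mult.commute)
        also have "\<dots> = ennreal ?ns * emeasure \<mu> X"
          using finite_measure.emeasure_eq_measure[OF prob_space.finite_measure[OF P]] by simp
        finally show ?thesis .
      qed
      show ?thesis unfolding e using emeasure_countably_additive[of \<mu>] S by (intro CA_cmult) simp
    qed
  next
    fix K :: nat and \<psi> :: "nat \<Rightarrow> complex"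
    have "space \<mu> = space M" using S by (rule sets_eq_imp_space_eq)
    then have "measure \<mu> (space M) = 1" using prob_space.prob_space[OF P] by simp
    then show "(\<lambda>m n. of_real (measure \<mu> (space M)) * idmat m n) = idmat" by simp
  qed
qed

lemma CA_cong:
  assumes "countably_additive M f" "\<And>X. X \<in> M \<Longrightarrow> f X = g X"
  shows "countably_additive M g"
  unfolding countably_additive_def
proof (intro allI impI)
  fix A :: "nat \<Rightarrow> _"
  assume A: "range A \<subseteq> M" "disjoint_family A" "\<Union> (range A) \<in> M"
  have "(\<Sum>i. f (A i)) = f (\<Union> (range A))" using assms(1) A unfolding countably_additive_def by simp
  moreover have "\<And>i. f (A i) = g (A i)" using A(1) assms(2) by auto
  ultimately show "(\<Sum>i. g (A i)) = g (\<Union> (range A))" using assms(2)[OF A(3)] by simp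
qed

lemma space_number: "space number_space = UNIV"
  unfolding number_space_def by simp

lemma sets_number: "sets number_space = UNIV"
  unfolding number_space_def by simp

lemma number_observable: "is_observable number_space number_obs"
  unfolding is_observable_def
proof (intro allI conjI ballI)
  fix K :: nat and \<psi> :: "nat \<Rightarrow> complex" and Y
  show "qform K \<psi> (number_obs Y) \<in> \<real>" by (simp add: qform_number)
  show "0 \<le> Re (qform K \<psi> (number_obs Y))" by (simp add: qform_number sum_nonneg)
next
  fix K :: nat and \<psi> :: "nat \<Rightarrow> complex"
  show "number_obs (space number_space) = idmat"
    unfolding space_number number_obs_def idmat_def by auto
  have e: "ennreal (Re (qform K \<psi> (number_obs Y))) =
      (\<Sum>n<K. ennreal ((cmod (\<psi> n))\<^sup>2) * emeasure (return number_space n) Y)" for Y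
  proof -
    have "(\<Sum>n\<in>{..<K} \<inter> Y. (cmod (\<psi> n))\<^sup>2) = (\<Sum>n<K. (cmod (\<psi> n))\<^sup>2 * indicator Y n)"
      by (simp add: sum.inter_restrict indicator_def if_distrib cong: if_cong)
    then have "ennreal (Re (qform K \<psi> (number_obs Y))) = ennreal (\<Sum>n<K. (cmod (\<psi> n))\<^sup>2 * indicator Y n)"
      by (simp add: qform_number)
    also have "\<dots> = (\<Sum>n<K. ennreal ((cmod (\<psi> n))\<^sup>2 * indicator Y n))"
      by (rule sum_ennreal[symmetric]) simp
    also have "\<dots> = (\<Sum>n<K. ennreal ((cmod (\<psi> n))\<^sup>2) * emeasure (return number_space n) Y)"
      by (intro sum.cong refl) (simp add: sets_number indicator_def)
    finally show ?thesis .
  qed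
  show "countably_additive (sets number_space) (\<lambda>Y. ennreal (Re (qform K \<psi> (number_obs Y))))"
    unfolding e
    by (intro CA_sum CA_cmult) (use emeasure_countably_additive[of "return number_space _"] in simp_all)
qed

definition sl1 :: "(real \<times> nat) set \<Rightarrow> real set" where
  "sl1 Z = (\<lambda>\<theta>. (\<theta>, 0::nat)) -` Z \<inter> space phase_space"

definition sl2 :: "(real \<times> nat) set \<Rightarrow> nat set" where
  "sl2 Z = (\<lambda>n. (0::real, n)) -` Z \<inter> space number_space"

definition Gj :: "real \<Rightarrow> real \<Rightarrow> (real \<times> nat) set \<Rightarrow> mat" where
  "Gj l u Z = (\<lambda>m n. of_real l * canonical_phase (sl1 Z) m n + of_real u * number_obs (sl2 Z) m n
      + of_real ((1 - l - u) * indicator Z (0, 0)) * idmat m n)"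

lemma zero_phase: "(0::real) \<in> space phase_space"
  unfolding space_phase by simp

lemma meas1: "(\<lambda>\<theta>. (\<theta>, 0::nat)) \<in> measurable phase_space (phase_space \<Otimes>\<^sub>M number_space)"
  by (rule measurable_Pair[OF measurable_ident_sets[OF refl] measurable_const]) (simp add: space_number)

lemma meas2: "(\<lambda>n. (0::real, n)) \<in> measurable number_space (phase_space \<Otimes>\<^sub>M number_space)"
  by (rule measurable_Pair[OF measurable_const measurable_ident_sets[OF refl]]) (rule zero_phase)

lemma qform_Gj:
  "qform K \<psi> (Gj l u Z) = of_real l * qform K \<psi> (canonical_phase (sl1 Z)) + of_real u * qform K \<psi> (number_obs (sl2 Z))
     + of_real ((1 - l - u) * indicator Z (0, 0)) * qform K \<psi> idmat"
  unfolding Gj_def by (simp only: qform_add qform_scale)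

lemma Gj_observable:
  assumes l: "0 \<le> l" and u: "0 \<le> u" and lu: "l + u \<le> 1"
  shows "is_observable (phase_space \<Otimes>\<^sub>M number_space) (Gj l u)"
  unfolding is_observable_def
proof (intro allI conjI ballI)
  fix K :: nat and \<psi> :: "nat \<Rightarrow> complex" and Z
  assume Z: "Z \<in> sets (phase_space \<Otimes>\<^sub>M number_space)"
  have s1: "sl1 Z \<in> sets phase_space" unfolding sl1_def using measurable_sets[OF meas1 Z] .
  have s2: "sl2 Z \<in> sets number_space" unfolding sl2_def using measurable_sets[OF meas2 Z] .
  show "qform K \<psi> (Gj l u Z) \<in> \<real>"
    unfolding qform_Gj
    using obs_props(1)[OF phase_observable s1, of K \<psi>] obs_props(1)[OF number_observable s2, of K \<psi>]
    by (metis Reals_add Reals_mult Reals_of_real qform_idmat)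
  show "0 \<le> Re (qform K \<psi> (Gj l u Z))"
    unfolding qform_Gj
    using obs_props(2)[OF phase_observable s1, of K \<psi>] obs_props(2)[OF number_observable s2, of K \<psi>] l u lu
    by (simp add: qform_idmat sum_nonneg)
next
  fix K :: nat and \<psi> :: "nat \<Rightarrow> complex"
  let ?P = "phase_space \<Otimes>\<^sub>M number_space"
  let ?ns = "\<Sum>n<K. (cmod (\<psi> n))\<^sup>2"
  let ?f1 = "\<lambda>X. ennreal (Re (qform K \<psi> (canonical_phase X)))"
  let ?f2 = "\<lambda>Y. ennreal (Re (qform K \<psi> (number_obs Y)))"
  have ca1: "countably_additive (sets ?P) (\<lambda>Z. ?f1 (sl1 Z))"
    unfolding sl1_def
    by (rule CA_vimage[OF _ meas1]) (use phase_observable in \<open>simp add: is_observable_def\<close>)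
  have ca2: "countably_additive (sets ?P) (\<lambda>Z. ?f2 (sl2 Z))"
    unfolding sl2_def
    by (rule CA_vimage[OF _ meas2]) (use number_observable in \<open>simp add: is_observable_def\<close>)
  have ca3: "countably_additive (sets ?P) (emeasure (return ?P (0, 0)))"
    using emeasure_countably_additive[of "return ?P (0,0)"] by simp
  have ca: "countably_additive (sets ?P)
      (\<lambda>Z. ennreal l * ?f1 (sl1 Z) + ennreal u * ?f2 (sl2 Z) + ennreal ((1 - l - u) * ?ns) * emeasure (return ?P (0, 0)) Z)"
    by (intro CA_add CA_cmult ca1 ca2 ca3)
  show "countably_additive (sets ?P) (\<lambda>Z. ennreal (Re (qform K \<psi> (Gj l u Z))))"
  proof (rule CA_cong[OF ca])
    fix Z assume Z: "Z \<in> sets ?P"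
    have s1: "sl1 Z \<in> sets phase_space" unfolding sl1_def using measurable_sets[OF meas1 Z] .
    have s2: "sl2 Z \<in> sets number_space" unfolding sl2_def using measurable_sets[OF meas2 Z] .
    have a: "0 \<le> Re (qform K \<psi> (canonical_phase (sl1 Z)))" by (rule obs_props(2)[OF phase_observable s1])
    have b: "0 \<le> Re (qform K \<psi> (number_obs (sl2 Z)))" by (rule obs_props(2)[OF number_observable s2])
    have c: "0 \<le> (1 - l - u) * indicator Z (0, 0) * ?ns" using lu by (simp add: sum_nonneg)
    have "Re (qform K \<psi> (Gj l u Z)) = l * Re (qform K \<psi> (canonical_phase (sl1 Z))) + u * Re (qform K \<psi> (number_obs (sl2 Z)))
       + (1 - l - u) * indicator Z (0, 0) * ?ns"
      unfolding qform_Gj by (simp add: qform_idmat)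
    then have "ennreal (Re (qform K \<psi> (Gj l u Z))) = ennreal (l * Re (qform K \<psi> (canonical_phase (sl1 Z))))
       + ennreal (u * Re (qform K \<psi> (number_obs (sl2 Z)))) + ennreal ((1 - l - u) * indicator Z (0, 0) * ?ns)"
      using a b c l u by (simp add: ennreal_plus[symmetric] del: ennreal_plus)
    also have "\<dots> = ennreal l * ?f1 (sl1 Z) + ennreal u * ?f2 (sl2 Z) + ennreal ((1 - l - u) * ?ns) * emeasure (return ?P (0, 0)) Z"
      using a b l u lu Z by (simp add: ennreal_mult indicator_def sum_nonneg)
    finally show "ennreal l * ?f1 (sl1 Z) + ennreal u * ?f2 (sl2 Z) + ennreal ((1 - l - u) * ?ns) * emeasure (return ?P (0, 0)) Z
        = ennreal (Re (qform K \<psi> (Gj l u Z)))" by simp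
  qed
  show "Gj l u (space ?P) = idmat"
  proof -
    have "sl1 (space ?P) = space phase_space" unfolding sl1_def by (auto simp: space_pair_measure space_number)
    moreover have "sl2 (space ?P) = UNIV" unfolding sl2_def by (auto simp: space_pair_measure space_number zero_phase)
    moreover have "(0::real, 0::nat) \<in> space ?P" by (simp add: space_pair_measure space_number zero_phase)
    ultimately show ?thesis
      unfolding Gj_def
      by (intro ext) (simp add: phase_space_idmat number_obs_def idmat_def algebra_simps)
  qed
qed

lemma phase_empty: "canonical_phase {} = (\<lambda>m n. 0)"
  unfolding canonical_phase_def set_lebesgue_integral_def by simp

lemma region_sup:
  assumes l: "0 \<le> l" "l \<le> 1" and u: "0 \<le> u" "u \<le> 1" and lu: "l + u \<le> 1"
  shows "(l, u) \<in> jm_region phase_space number_space canonical_phase number_obs"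
proof -
  let ?\<mu>1 = "return phase_space 0" and ?\<mu>2 = "return number_space (0::nat)"
  let ?T1 = "\<lambda>X m n. of_real (measure ?\<mu>1 X) * idmat m n"
  let ?T2 = "\<lambda>Y m n. of_real (measure ?\<mu>2 Y) * idmat m n"
  have t1: "trivial_observable phase_space ?T1"
    by (rule trivial_obs) (auto intro: prob_space_return zero_phase)
  have t2: "trivial_observable number_space ?T2"
    by (rule trivial_obs) (auto intro: prob_space_return simp: space_number)
  have jm: "jointly_measurable phase_space number_space (mix l canonical_phase ?T1) (mix u number_obs ?T2)"
    unfolding jointly_measurable_def
  proof (intro exI conjI ballI)
    show "is_observable (phase_space \<Otimes>\<^sub>M number_space) (Gj l u)"
      by (rule Gj_observable) (use l u lu in auto)
  next
    fix X assume X: "X \<in> sets phase_space"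
    have Xs: "X \<subseteq> space phase_space" using sets.sets_into_space[OF X] .
    have a: "sl1 (X \<times> space number_space) = X" unfolding sl1_def using Xs by (auto simp: space_number)
    have b: "sl2 (X \<times> space number_space) = (if 0 \<in> X then UNIV else {})"
      unfolding sl2_def by (auto simp: space_number)
    have c: "measure ?\<mu>1 X = indicator X 0" using X by (simp add: measure_return)
    show "Gj l u (X \<times> space number_space) = mix l canonical_phase ?T1 X"
      unfolding Gj_def mix_def a b c
      by (intro ext) (auto simp: number_obs_def idmat_def space_number indicator_def algebra_simps)
  next
    fix Y assume Y: "Y \<in> sets number_space"
    have a: "sl1 (space phase_space \<times> Y) = (if 0 \<in> Y then space phase_space else {})"
      unfolding sl1_def by auto
    have b: "sl2 (space phase_space \<times> Y) = Y" unfolding sl2_def using zero_phase by (auto simp: space_number)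
    have c: "measure ?\<mu>2 Y = indicator Y 0" using Y by (simp add: measure_return)
    show "Gj l u (space phase_space \<times> Y) = mix u number_obs ?T2 Y"
      unfolding Gj_def mix_def a b c
      by (intro ext) (auto simp: phase_space_idmat phase_empty idmat_def zero_phase indicator_def algebra_simps)
  qed
  show ?thesis unfolding jm_region_def using l u t1 t2 jm by (simp only: mem_Collect_eq prod.case atLeastAtMost_iff) blast
qed

lemma cos_le_delta:
  fixes t \<delta> :: real
  assumes "0 < \<delta>" "\<delta> \<le> pi" "\<delta> \<le> \<bar>t\<bar>" "\<bar>t\<bar> \<le> 2*pi - \<delta>"
  shows "cos t \<le> cos \<delta>"
proof -
  have ct: "cos t = cos \<bar>t\<bar>" by (cases "t \<ge> 0") auto
  show ?thesis
  proof (cases "\<bar>t\<bar> \<le> pi")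
    case True
    then show ?thesis unfolding ct using assms by (intro cos_monotone_0_pi_le) auto
  next
    case False
    have "cos \<bar>t\<bar> = cos (2*pi - \<bar>t\<bar>)" by (simp add: cos_diff)
    also have "\<dots> \<le> cos \<delta>" using assms False by (intro cos_monotone_0_pi_le) auto
    finally show ?thesis unfolding ct .
  qed
qed

lemma cmod_cis_minus_1: "(cmod (cis t - 1))\<^sup>2 = 2 - 2 * cos t"
proof -
  have "(cmod (cis t - 1))\<^sup>2 = (cos t - 1)\<^sup>2 + (sin t)\<^sup>2"
    by (simp add: cmod_power2)
  also have "\<dots> = 2 - 2 * cos t"
    using sin_cos_squared_add[of t] by (simp add: power2_eq_square algebra_simps)
  finally show ?thesis .
qed

lemma geom_bound:
  fixes z :: complex
  assumes "cmod z = 1" "z \<noteq> 1"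
  shows "(cmod (\<Sum>n<N. z ^ n))\<^sup>2 \<le> 4 / (cmod (z - 1))\<^sup>2"
proof -
  have "(\<Sum>n<N. z ^ n) = (z ^ N - 1) / (z - 1)" by (rule geometric_sum[OF assms(2)])
  then have e: "cmod (\<Sum>n<N. z ^ n) = cmod (z ^ N - 1) / cmod (z - 1)" by (simp add: norm_divide)
  have "cmod (z ^ N - 1) \<le> cmod (z ^ N) + cmod 1" by (rule norm_triangle_ineq4)
  also have "\<dots> = 2" using assms(1) by (simp add: norm_power)
  finally have n2: "cmod (z ^ N - 1) \<le> 2" .
  have pos: "cmod (z - 1) > 0" using assms(2) by simp
  have "cmod (\<Sum>n<N. z ^ n) \<le> 2 / cmod (z - 1)"
    unfolding e using n2 pos by (simp add: divide_right_mono)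
  then have "(cmod (\<Sum>n<N. z ^ n))\<^sup>2 \<le> (2 / cmod (z - 1))\<^sup>2"
    by (intro power_mono) auto
  then show ?thesis by (simp add: power_divide)
qed

definition cstate :: "nat \<Rightarrow> real \<Rightarrow> nat \<Rightarrow> complex" where
  "cstate N \<theta>0 = (\<lambda>n. cis (real n * \<theta>0) / of_real (sqrt (real N)))"

lemma cstate_norm: "N > 0 \<Longrightarrow> (\<Sum>n<N. (cmod (cstate N \<theta>0 n))\<^sup>2) = 1"
  unfolding cstate_def by (simp add: norm_divide power_divide)

lemma pfun_bound:
  fixes \<delta> \<theta> \<theta>0 :: real
  assumes N: "N > 0" and c: "cos (\<theta>0 - \<theta>) \<le> cos \<delta>" and c1: "cos \<delta> < 1"
  shows "(cmod (pfun N (cstate N \<theta>0) \<theta>))\<^sup>2 \<le> 2 / (real N * (1 - cos \<delta>))"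
proof -
  let ?z = "cis (\<theta>0 - \<theta>)"
  have "pfun N (cstate N \<theta>0) \<theta> = (\<Sum>n<N. ?z ^ n) / of_real (sqrt (real N))"
    unfolding pfun_def cstate_def sum_divide_distrib
    by (intro sum.cong refl) (simp add: Complex.DeMoivre cis_mult algebra_simps)
  then have e: "(cmod (pfun N (cstate N \<theta>0) \<theta>))\<^sup>2 = (cmod (\<Sum>n<N. ?z ^ n))\<^sup>2 / real N"
    by (simp add: norm_divide power_divide)
  have z1: "?z \<noteq> 1"
  proof
    assume "?z = 1"
    then have "cos (\<theta>0 - \<theta>) = 1" by (metis cis.sel(1) one_complex.sel(1))
    then show False using c c1 by simp
  qed
  have d: "(cmod (?z - 1))\<^sup>2 = 2 - 2 * cos (\<theta>0 - \<theta>)" by (rule cmod_cis_minus_1)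
  have dpos: "2 - 2 * cos \<delta> > 0" using c1 by simp
  have "(cmod (\<Sum>n<N. ?z ^ n))\<^sup>2 \<le> 4 / (cmod (?z - 1))\<^sup>2" by (rule geom_bound) (simp_all add: z1)
  also have "\<dots> \<le> 4 / (2 - 2 * cos \<delta>)"
    unfolding d using c dpos by (intro divide_left_mono) auto
  finally have "(cmod (\<Sum>n<N. ?z ^ n))\<^sup>2 / real N \<le> (4 / (2 - 2 * cos \<delta>)) / real N"
    using N by (intro divide_right_mono) auto
  also have "\<dots> = 2 / (real N * (1 - cos \<delta>))"
  proof -
    have "4 / (2 - 2 * cos \<delta>) = 2 / (1 - cos \<delta>)"
      using dpos by (simp add: divide_simps)
    then show ?thesis by simp
  qed
  finally show ?thesis unfolding e .
qed

lemma cos_lt_1: "0 < \<delta> \<Longrightarrow> \<delta> \<le> pi \<Longrightarrow> cos \<delta> < 1"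
  using cos_monotone_0_pi[of 0 \<delta>] by simp

lemma phase_conc:
  fixes \<delta> \<theta>0 :: real and N :: nat
  assumes d: "0 < \<delta>" "\<delta> \<le> pi" and t: "0 \<le> \<theta>0 - \<delta>" "\<theta>0 + \<delta> \<le> 2*pi - \<delta>" and N: "N > 0"
  shows "Re (qform N (cstate N \<theta>0) (canonical_phase {\<theta>0-\<delta>..<\<theta>0+\<delta>})) \<ge> 1 - 2 / (real N * (1 - cos \<delta>))"
proof -
  let ?X = "{\<theta>0-\<delta>..<\<theta>0+\<delta>}" and ?Y = "{0..<2*pi} - {\<theta>0-\<delta>..<\<theta>0+\<delta>}"
  let ?\<psi> = "cstate N \<theta>0"
  let ?C = "2 / (real N * (1 - cos \<delta>))"
  have c1: "cos \<delta> < 1" using cos_lt_1 d by simp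
  have Xs: "?X \<in> sets phase_space" unfolding sets_phase using d t by auto
  have Ys: "?Y \<in> sets phase_space" unfolding sets_phase by auto
  have XY: "?X \<union> ?Y = space phase_space" unfolding space_phase using d t by auto
  have "Re (qform N ?\<psi> (canonical_phase (?X \<union> ?Y))) = Re (qform N ?\<psi> (canonical_phase ?X)) + Re (qform N ?\<psi> (canonical_phase ?Y))"
    by (rule obs_add[OF phase_observable Xs Ys]) auto
  moreover have "Re (qform N ?\<psi> (canonical_phase (?X \<union> ?Y))) = 1"
    unfolding XY phase_space_idmat qform_idmat using cstate_norm[OF N] by simp
  moreover have "Re (qform N ?\<psi> (canonical_phase ?Y)) \<le> ?C"
  proof -
    have Yb: "?Y \<in> sets borel" by auto
    have "Re (qform N ?\<psi> (canonical_phase ?Y)) = (LINT \<theta>:?Y|lborel. phdens N ?\<psi> \<theta>)"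
      using phase_qform'[OF Ys] by simp
    also have "\<dots> \<le> (LINT \<theta>:?Y|lborel. ?C / (2*pi))"
    proof (rule set_integral_mono)
      show "set_integrable lborel ?Y (phdens N ?\<psi>)" by (rule phdens_int[OF Ys])
      show "set_integrable lborel ?Y (\<lambda>_. ?C / (2*pi))" by (rule cont_integrable) auto
      fix \<theta> assume th: "\<theta> \<in> ?Y"
      have "cos (\<theta>0 - \<theta>) \<le> cos \<delta>"
        by (rule cos_le_delta) (use th d t in auto)
      then have "(cmod (pfun N ?\<psi> \<theta>))\<^sup>2 \<le> ?C" by (rule pfun_bound[OF N _ c1])
      then have "(cmod (pfun N ?\<psi> \<theta>))\<^sup>2 / (2*pi) \<le> ?C / (2*pi)"
        by (rule divide_right_mono) simp
      moreover have "phdens N ?\<psi> \<theta> = (cmod (pfun N ?\<psi> \<theta>))\<^sup>2 / (2*pi)"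
        unfolding phdens_def by simp
      ultimately show "phdens N ?\<psi> \<theta> \<le> ?C / (2*pi)" by simp
    qed
    also have "\<dots> = measure lborel ?Y * (?C / (2*pi))"
    proof -
      have "emeasure lborel ?Y \<le> emeasure lborel {0..<2*pi}" by (rule emeasure_mono) auto
      then have "emeasure lborel ?Y \<noteq> \<infinity>" by (auto simp: top_unique)
      then show ?thesis by (subst set_integral_const) auto
    qed
    also have "\<dots> \<le> (2*pi) * (?C / (2*pi))"
    proof (rule mult_right_mono)
      have "measure lborel ?Y \<le> measure lborel {0..<2*pi}"
        by (rule measure_mono_fmeasurable) (auto simp: fmeasurable_def)
      then show "measure lborel ?Y \<le> 2*pi" by simp
      show "0 \<le> ?C / (2*pi)" using c1 by simp
    qed
    also have "\<dots> = ?C" by simp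
    finally show ?thesis .
  qed
  ultimately show ?thesis by linarith
qed

lemma obs_mono:
  assumes obs: "is_observable M T" and X: "X \<in> sets M" and Y: "Y \<in> sets M" and sub: "X \<subseteq> Y"
  shows "Re (qform K \<phi> (T X)) \<le> Re (qform K \<phi> (T Y))"
proof -
  have e: "Y = X \<union> (Y - X)" using sub by auto
  have "Re (qform K \<phi> (T Y)) = Re (qform K \<phi> (T X)) + Re (qform K \<phi> (T (Y - X)))"
    by (subst e, rule obs_add[OF obs X]) (use X Y in auto)
  moreover have "0 \<le> Re (qform K \<phi> (T (Y - X)))" using obs_props(2)[OF obs] X Y by auto
  ultimately show ?thesis by simp
qed

lemma obs_fin_sum:
  assumes obs: "is_observable (phase_space \<Otimes>\<^sub>M number_space) G" and X: "X \<in> sets phase_space"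
    and S: "finite S"
  shows "Re (qform K \<phi> (G (X \<times> S))) = (\<Sum>n\<in>S. Re (qform K \<phi> (G (X \<times> {n}))))"
  using S
proof (induction S rule: finite_induct)
  case empty
  then show ?case using obs_empty[OF obs] by simp
next
  case (insert n S)
  have e: "X \<times> insert n S = X \<times> {n} \<union> X \<times> S" by auto
  have "Re (qform K \<phi> (G (X \<times> insert n S))) = Re (qform K \<phi> (G (X \<times> {n}))) + Re (qform K \<phi> (G (X \<times> S)))"
    unfolding e by (rule obs_add[OF obs]) (use X insert in \<open>auto simp: sets_number\<close>)
  then show ?case using insert by simp
qed

lemma qform_unit:
  assumes "n < K"
  shows "qform K (\<lambda>k. if k = n then c else 0) M = of_real ((cmod c)\<^sup>2) * M n n"
proof -
  have "qform K (\<lambda>k. if k = n then c else 0) M = (\<Sum>m<K. \<Sum>k<K. if m = n then (if k = n then cnj c * M n n * c else 0) else 0)"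
    unfolding qform_def by (intro sum.cong refl) auto
  also have "\<dots> = (\<Sum>m<K. if m = n then cnj c * M n n * c else 0)"
    using assms by (intro sum.cong refl) simp
  also have "\<dots> = cnj c * M n n * c" using assms by simp
  also have "\<dots> = of_real ((cmod c)\<^sup>2) * M n n" by (simp only: normsq_eq mult_ac)
  finally show ?thesis .
qed

lemma qform_mix_triv:
  assumes "T X = (\<lambda>m n. of_real t * idmat m n)"
  shows "Re (qform K \<phi> (mix l A T X)) = l * Re (qform K \<phi> (A X)) + (1 - l) * t * (\<Sum>n<K. (cmod (\<phi> n))\<^sup>2)"
  unfolding mix_def assms by (simp add: qform_add qform_scale qform_idmat)

lemma phase_diag:
  assumes "X \<in> sets phase_space"
  shows "Re (canonical_phase X n n) = measure lborel X / (2*pi)"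
proof -
  have Xb: "X \<in> sets borel" and Xs: "X \<subseteq> {0..<2*pi}" using assms sets_phase by auto
  have "emeasure lborel X \<le> emeasure lborel {0..<2*pi}" using Xb Xs by (intro emeasure_mono) auto
  then have fin: "emeasure lborel X \<noteq> \<infinity>" by (auto simp: top_unique)
  have "(LINT \<theta>:X|lborel. cis ((real n - real n) * \<theta>)) = (LINT \<theta>:X|lborel. (1::complex))" by simp
  also have "\<dots> = measure lborel X *\<^sub>R 1" using Xb fin by (intro set_integral_const) auto
  finally show ?thesis unfolding canonical_phase_def by (simp add: scaleR_conv_of_real)
qed

lemma alg_bound:
  fixes a p r v q qx qy :: real
  assumes a: "0 \<le> a" and p: "0 \<le> p" and r: "0 \<le> r" and v: "0 \<le> v" "v \<le> 1"
    and qx: "0 \<le> qx" "qx \<le> p\<^sup>2 * a" and qy: "0 \<le> qy" "qy \<le> v * r"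
    and q: "q \<le> (sqrt qx + sqrt qy)\<^sup>2"
  shows "q \<le> a * p\<^sup>2 + sqrt a * (p\<^sup>2 + r) + v * r"
proof -
  have sx: "sqrt qx \<le> p * sqrt a"
  proof -
    have "sqrt qx \<le> sqrt (p\<^sup>2 * a)" by (rule real_sqrt_le_mono[OF qx(2)])
    also have "\<dots> = p * sqrt a" using p by (simp add: real_sqrt_mult)
    finally show ?thesis .
  qed
  have sy: "sqrt qy \<le> sqrt (v * r)" by (rule real_sqrt_le_mono[OF qy(2)])
  have "(sqrt qx + sqrt qy)\<^sup>2 \<le> (p * sqrt a + sqrt (v * r))\<^sup>2"
    using qx qy by (intro power_mono add_mono sx sy) auto
  also have "\<dots> = a * p\<^sup>2 + sqrt a * (2 * p * sqrt (v * r)) + v * r"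
    using a v r by (simp add: power2_eq_square algebra_simps)
  also have "\<dots> \<le> a * p\<^sup>2 + sqrt a * (p\<^sup>2 + r) + v * r"
  proof -
    have "sqrt (v * r) \<le> sqrt r" using v r by (intro real_sqrt_le_mono) (simp add: mult_left_le_one_le)
    then have "2 * p * sqrt (v * r) \<le> 2 * p * sqrt r" using p by (simp add: mult_left_mono)
    also have "\<dots> \<le> p\<^sup>2 + r"
    proof -
      have "0 \<le> (p - sqrt r)\<^sup>2" by simp
      then show ?thesis using r by (simp add: power2_eq_square algebra_simps)
    qed
    finally have "2 * p * sqrt (v * r) \<le> p\<^sup>2 + r" .
    then show ?thesis using a by (simp add: mult_left_mono)
  qed
  finally show ?thesis using q by linarith
qed

lemma sum_alg:
  fixes p r :: "nat \<Rightarrow> real"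
  shows "(\<Sum>n<K. a * p n + b * (p n + r n) + c * r n) = a * (\<Sum>n<K. p n) + b * ((\<Sum>n<K. p n) + (\<Sum>n<K. r n)) + c * (\<Sum>n<K. r n)"
  by (simp add: sum.distrib sum_distrib_left distrib_left)

lemma main_ineq:
  assumes obs: "is_observable (phase_space \<Otimes>\<^sub>M number_space) G"
    and m1: "\<And>X. X \<in> sets phase_space \<Longrightarrow> G (X \<times> space number_space) = mix l canonical_phase T1 X"
    and m2: "\<And>Y. Y \<in> sets number_space \<Longrightarrow> G (space phase_space \<times> Y) = mix u number_obs T2 Y"
    and T1: "\<And>X. X \<in> sets phase_space \<Longrightarrow> T1 X = (\<lambda>m n. of_real (measure \<mu> X) * idmat m n)"
    and T2: "\<And>Y. Y \<in> sets number_space \<Longrightarrow> T2 Y = (\<lambda>m n. of_real (measure \<nu> Y) * idmat m n)"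
    and nu: "prob_space \<nu>" "sets \<nu> = sets number_space"
    and l: "0 \<le> l" "l \<le> 1" and u: "0 \<le> u" "u \<le> 1"
    and X: "X \<in> sets phase_space"
    and psi: "(\<Sum>n<K. (cmod (\<psi> n))\<^sup>2) = 1"
  shows "l * Re (qform K \<psi> (canonical_phase X)) \<le>
     (l * (measure lborel X / (2*pi)) + (1 - l) * measure \<mu> X)
     + 2 * sqrt (l * (measure lborel X / (2*pi)) + (1 - l) * measure \<mu> X) + (1 - u)"
proof -
  define a where "a = l * (measure lborel X / (2*pi)) + (1 - l) * measure \<mu> X"
  have a0: "0 \<le> a" unfolding a_def using l by simp
  let ?P = "phase_space \<Otimes>\<^sub>M number_space"
  have XS: "X \<times> S \<in> sets ?P" for S using X by (simp add: sets_number)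
  have SS: "space phase_space \<times> S \<in> sets ?P" for S by (simp add: sets_number)
  have Sn: "S \<in> sets number_space" for S by (simp add: sets_number)
  have qA: "Re (qform K \<phi> (G (X \<times> UNIV))) = l * Re (qform K \<phi> (canonical_phase X)) + (1 - l) * measure \<mu> X * (\<Sum>n<K. (cmod (\<phi> n))\<^sup>2)" for \<phi>
    using m1[OF X] unfolding space_number by (simp add: qform_mix_triv T1[OF X])
  have qB: "Re (qform K \<phi> (G (space phase_space \<times> Y))) = u * (\<Sum>n\<in>{..<K} \<inter> Y. (cmod (\<phi> n))\<^sup>2) + (1 - u) * measure \<nu> Y * (\<Sum>n<K. (cmod (\<phi> n))\<^sup>2)" for \<phi> Y
    using m2[OF Sn] by (simp add: qform_mix_triv T2[OF Sn] qform_number)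
  have En: "Re (qform K \<psi> (G (X \<times> {n}))) \<le> a * (cmod (\<psi> n))\<^sup>2 + sqrt a * ((cmod (\<psi> n))\<^sup>2 + measure \<nu> {n}) + (1 - u) * measure \<nu> {n}"
    if n: "n < K" for n
  proof -
    let ?E = "G (X \<times> {n})"
    let ?x = "\<lambda>k. if k = n then \<psi> n else 0" and ?y = "\<lambda>k. if k = n then 0 else \<psi> k"
    let ?e = "\<lambda>k. if k = n then (1::complex) else 0"
    have Epos: "0 \<le> Re (qform K \<phi> ?E)" for \<phi> by (rule obs_props(2)[OF obs XS])
    have psi_eq: "\<psi> = (\<lambda>k. ?x k + ?y k)" by auto
    have qx: "Re (qform K ?x ?E) = (cmod (\<psi> n))\<^sup>2 * Re (?E n n)"
      using qform_unit[OF n, of "\<psi> n" ?E] by simp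
    have Enn: "Re (?E n n) = Re (qform K ?e ?E)"
      using qform_unit[OF n, of 1 ?E] by simp
    also have "\<dots> \<le> Re (qform K ?e (G (X \<times> UNIV)))"
      by (rule obs_mono[OF obs XS XS]) auto
    also have "\<dots> = l * Re (canonical_phase X n n) + (1 - l) * measure \<mu> X * (\<Sum>k<K. (cmod (?e k))\<^sup>2)"
      unfolding qA using qform_unit[OF n, of 1 "canonical_phase X"] by simp
    also have "\<dots> = a"
    proof -
      have "(\<Sum>k<K. (cmod (?e k))\<^sup>2) = (\<Sum>k<K. if k = n then 1 else 0)"
        by (intro sum.cong refl) auto
      also have "\<dots> = 1" using n by simp
      finally have "(\<Sum>k<K. (cmod (?e k))\<^sup>2) = 1" .
      then show ?thesis unfolding a_def phase_diag[OF X] by simp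
    qed
    finally have Ea: "Re (?E n n) \<le> a" .
    have qy: "Re (qform K ?y ?E) \<le> (1 - u) * measure \<nu> {n}"
    proof -
      have "Re (qform K ?y ?E) \<le> Re (qform K ?y (G (space phase_space \<times> {n})))"
        using sets.sets_into_space[OF X] by (intro obs_mono[OF obs XS SS]) auto
      also have "\<dots> = (1 - u) * measure \<nu> {n} * (\<Sum>k<K. (cmod (?y k))\<^sup>2)"
        unfolding qB using n by simp
      also have "\<dots> \<le> (1 - u) * measure \<nu> {n} * 1"
      proof (rule mult_left_mono)
        have "(\<Sum>k<K. (cmod (?y k))\<^sup>2) \<le> (\<Sum>k<K. (cmod (\<psi> k))\<^sup>2)"
          by (intro sum_mono) auto
        then show "(\<Sum>k<K. (cmod (?y k))\<^sup>2) \<le> 1" using psi by simp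
        show "0 \<le> (1 - u) * measure \<nu> {n}" using u by simp
      qed
      finally show ?thesis by simp
    qed
    have tri: "Re (qform K \<psi> ?E) \<le> (sqrt (Re (qform K ?x ?E)) + sqrt (Re (qform K ?y ?E)))\<^sup>2"
      using qform_triangle[OF Epos, of ?x ?y] psi_eq by simp
    show ?thesis
    proof (rule alg_bound[OF a0 _ _ _ _ _ _ _ _ tri])
      show "0 \<le> Re (qform K ?x ?E)" "0 \<le> Re (qform K ?y ?E)" by (rule Epos)+
      show "Re (qform K ?x ?E) \<le> (cmod (\<psi> n))\<^sup>2 * a" unfolding qx using Ea by (simp add: mult_left_mono)
      show "Re (qform K ?y ?E) \<le> (1 - u) * measure \<nu> {n}" by (rule qy)
    qed (use u in auto)
  qed
  have tail: "Re (qform K \<psi> (G (X \<times> {K..}))) \<le> (1 - u) * measure \<nu> {K..}"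
  proof -
    have "Re (qform K \<psi> (G (X \<times> {K..}))) \<le> Re (qform K \<psi> (G (space phase_space \<times> {K..})))"
      using sets.sets_into_space[OF X] by (intro obs_mono[OF obs XS SS]) auto
    also have "\<dots> = (1 - u) * measure \<nu> {K..}"
    proof -
      have "{..<K} \<inter> {K..} = {}" by auto
      then show ?thesis unfolding qB psi by simp
    qed
    finally show ?thesis .
  qed
  have fm: "finite_measure \<nu>" using nu(1) by (rule prob_space.finite_measure)
  have nsets: "S \<in> sets \<nu>" for S using nu(2) by (simp add: sets_number)
  have sp: "space \<nu> = UNIV" using sets_eq_imp_space_eq[OF nu(2)] by (simp add: space_number)
  have nsum: "(\<Sum>n<K. measure \<nu> {n}) + measure \<nu> {K..} = 1"
  proof -
    have "(\<Sum>n<K. measure \<nu> {n}) = measure \<nu> {..<K}"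
      by (rule finite_measure.finite_measure_eq_sum_singleton[OF fm, symmetric]) (auto intro: nsets)
    moreover have "measure \<nu> ({..<K} \<union> {K..}) = measure \<nu> {..<K} + measure \<nu> {K..}"
      by (rule finite_measure.finite_measure_Union[OF fm]) (auto intro: nsets)
    moreover have "{..<K} \<union> {K..} = space \<nu>" unfolding sp by auto
    ultimately show ?thesis using prob_space.prob_space[OF nu(1)] by simp
  qed
  have nn: "0 \<le> measure \<nu> {K..}" by simp
  have "Re (qform K \<psi> (G (X \<times> UNIV))) = Re (qform K \<psi> (G (X \<times> {..<K}))) + Re (qform K \<psi> (G (X \<times> {K..})))"
  proof -
    have "X \<times> UNIV = X \<times> {..<K} \<union> X \<times> {K..}" by auto
    then show ?thesis by (simp only:) (rule obs_add[OF obs XS XS], auto)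
  qed
  also have "\<dots> = (\<Sum>n<K. Re (qform K \<psi> (G (X \<times> {n})))) + Re (qform K \<psi> (G (X \<times> {K..})))"
    using obs_fin_sum[OF obs X, of "{..<K}"] by simp
  also have "\<dots> \<le> (\<Sum>n<K. a * (cmod (\<psi> n))\<^sup>2 + sqrt a * ((cmod (\<psi> n))\<^sup>2 + measure \<nu> {n}) + (1 - u) * measure \<nu> {n})
      + (1 - u) * measure \<nu> {K..}"
    by (intro add_mono sum_mono En tail) auto
  also have "\<dots> = a * 1 + sqrt a * (1 + (\<Sum>n<K. measure \<nu> {n})) + (1 - u) * ((\<Sum>n<K. measure \<nu> {n}) + measure \<nu> {K..})"
    unfolding sum_alg psi by (simp add: algebra_simps)
  also have "\<dots> \<le> a + 2 * sqrt a + (1 - u)"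
  proof -
    have "(\<Sum>n<K. measure \<nu> {n}) \<le> 1" using nsum nn by linarith
    then have "sqrt a * (1 + (\<Sum>n<K. measure \<nu> {n})) \<le> sqrt a * 2" using a0 by (intro mult_left_mono) auto
    then show ?thesis using nsum by simp
  qed
  finally have A: "Re (qform K \<psi> (G (X \<times> UNIV))) \<le> a + 2 * sqrt a + (1 - u)" .
  have "l * Re (qform K \<psi> (canonical_phase X)) \<le> Re (qform K \<psi> (G (X \<times> UNIV)))"
    unfolding qA psi using l by simp
  then show ?thesis using A unfolding a_def by simp
qed

definition Xj :: "nat \<Rightarrow> nat \<Rightarrow> real set" where
  "Xj k j = {2 * real j * (pi / real k) ..< 2 * real j * (pi / real k) + 2 * (pi / real k)}"

lemma aux2: "(a + 1) * (d::real) \<le> b * d \<Longrightarrow> 2 * a * d + 2 * d \<le> 2 * b * d"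
  by (simp add: algebra_simps)

lemma Xj_sets:
  assumes "k \<ge> 2" "j < k - 1"
  shows "Xj k j \<in> sets phase_space"
proof -
  have "real j + 1 \<le> real k" using assms by linarith
  then have "(real j + 1) * (pi / real k) \<le> real k * (pi / real k)"
    by (intro mult_right_mono) auto
  then have "2 * real j * (pi / real k) + 2 * (pi / real k) \<le> 2 * real k * (pi / real k)"
    by (rule aux2)
  also have "\<dots> = 2 * pi" using assms by simp
  finally have "2 * real j * (pi / real k) + 2 * (pi / real k) \<le> 2 * pi" .
  then show ?thesis unfolding sets_phase Xj_def by auto
qed

lemma Xj_disj:
  assumes "k \<ge> 2"
  shows "disjoint_family_on (Xj k) S"
  unfolding disjoint_family_on_def
proof (intro ballI impI)
  fix i j assume "i \<in> S" "j \<in> S" "i \<noteq> j"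
  have d: "pi / real k > 0" using assms by simp
  show "Xj k i \<inter> Xj k j = {}"
  proof (cases "i < j")
    case True
    then have "real i + 1 \<le> real j" by linarith
    then have "(real i + 1) * (pi / real k) \<le> real j * (pi / real k)"
      using d by (intro mult_right_mono) auto
    then have "2 * real i * (pi / real k) + 2 * (pi / real k) \<le> 2 * real j * (pi / real k)"
      by (rule aux2)
    then show ?thesis unfolding Xj_def by auto
  next
    case False
    then have "real j + 1 \<le> real i" using \<open>i \<noteq> j\<close> by linarith
    then have "(real j + 1) * (pi / real k) \<le> real i * (pi / real k)"
      using d by (intro mult_right_mono) auto
    then have "2 * real j * (pi / real k) + 2 * (pi / real k) \<le> 2 * real i * (pi / real k)"
      by (rule aux2)
    then show ?thesis unfolding Xj_def by auto
  qed
qed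

lemma pigeon:
  assumes P: "prob_space \<mu>" and S: "sets \<mu> = sets phase_space" and k: "k \<ge> 2"
  shows "\<exists>j<k-1. measure \<mu> (Xj k j) \<le> 1 / real (k - 1)"
proof (rule ccontr)
  assume "\<not> ?thesis"
  then have big: "\<And>j. j < k - 1 \<Longrightarrow> measure \<mu> (Xj k j) > 1 / real (k - 1)" by force
  have fm: "finite_measure \<mu>" using P by (rule prob_space.finite_measure)
  have "measure \<mu> (\<Union>j\<in>{..<k-1}. Xj k j) = (\<Sum>j<k-1. measure \<mu> (Xj k j))"
    by (rule finite_measure.finite_measure_finite_Union[OF fm])
       (use Xj_sets[OF k] S Xj_disj[OF k] in auto)
  also have "\<dots> > (\<Sum>j<k-1. 1 / real (k - 1))"
    by (rule sum_strict_mono) (use k big in \<open>auto simp: lessThan_empty_iff\<close>)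
  also have "(\<Sum>j<k-1. 1 / real (k - 1)) = 1" using k by simp
  finally have "measure \<mu> (\<Union>j\<in>{..<k-1}. Xj k j) > 1" .
  moreover have "measure \<mu> (\<Union>j\<in>{..<k-1}. Xj k j) \<le> 1"
    using prob_space.prob_le_1[OF P] by simp
  ultimately show False by simp
qed

lemma lim_N:
  fixes x y D :: real
  assumes "\<And>N::nat. N > 0 \<Longrightarrow> x \<le> y + D / real N"
  shows "x \<le> y"
proof (rule ccontr)
  assume "\<not> x \<le> y"
  then have e: "x - y > 0" by simp
  obtain N :: nat where N: "real N > \<bar>D\<bar> / (x - y)" using reals_Archimedean2 by blast
  have "\<bar>D\<bar> / (x - y) \<ge> 0" using e by simp
  then have "real N > 0" using N by linarith
  then have Np: "N > 0" by simp
  have "D / real N < x - y"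
  proof -
    have "\<bar>D\<bar> < (x - y) * real N" using N e by (simp add: field_simps)
    then have "D < (x - y) * real N" by linarith
    then show ?thesis using Np by (simp add: field_simps)
  qed
  then show False using assms[OF Np] by simp
qed

lemma k_bound:
  fixes l u :: real
  assumes obs: "is_observable (phase_space \<Otimes>\<^sub>M number_space) G"
    and m1: "\<And>X. X \<in> sets phase_space \<Longrightarrow> G (X \<times> space number_space) = mix l canonical_phase T1 X"
    and m2: "\<And>Y. Y \<in> sets number_space \<Longrightarrow> G (space phase_space \<times> Y) = mix u number_obs T2 Y"
    and T1: "\<And>X. X \<in> sets phase_space \<Longrightarrow> T1 X = (\<lambda>m n. of_real (measure \<mu> X) * idmat m n)"
    and T2: "\<And>Y. Y \<in> sets number_space \<Longrightarrow> T2 Y = (\<lambda>m n. of_real (measure \<nu> Y) * idmat m n)"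
    and mu: "prob_space \<mu>" "sets \<mu> = sets phase_space"
    and nu: "prob_space \<nu>" "sets \<nu> = sets number_space"
    and l: "0 \<le> l" "l \<le> 1" and u: "0 \<le> u" "u \<le> 1"
    and k: "k \<ge> 2"
  shows "l + u - 1 \<le> 2 / real (k - 1) + 2 * sqrt (2 / real (k - 1))"
proof -
  obtain j where j: "j < k - 1" and mj: "measure \<mu> (Xj k j) \<le> 1 / real (k - 1)"
    using pigeon[OF mu k] by blast
  define \<delta> where "\<delta> = pi / real k"
  define \<theta>0 where "\<theta>0 = 2 * real j * \<delta> + \<delta>"
  have dpos: "0 < \<delta>" unfolding \<delta>_def using k by simp
  have dpi: "\<delta> \<le> pi" unfolding \<delta>_def using k by (simp add: field_simps)
  have XjE: "Xj k j = {\<theta>0 - \<delta>..<\<theta>0 + \<delta>}" unfolding Xj_def \<theta>0_def \<delta>_def[symmetric] by (simp add: algebra_simps)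
  have t1: "0 \<le> \<theta>0 - \<delta>" unfolding \<theta>0_def using dpos by simp
  have t2: "\<theta>0 + \<delta> \<le> 2*pi - \<delta>"
  proof -
    have "2 * real j + 3 \<le> 2 * real k" using j by linarith
    then have "(2 * real j + 3) * \<delta> \<le> (2 * real k) * \<delta>" using dpos by (intro mult_right_mono) auto
    moreover have "(2 * real k) * \<delta> = 2 * pi" unfolding \<delta>_def using k by simp
    ultimately show ?thesis unfolding \<theta>0_def by (simp add: algebra_simps)
  qed
  have Xs: "Xj k j \<in> sets phase_space" by (rule Xj_sets[OF k j])
  define a where "a = l * (measure lborel (Xj k j) / (2*pi)) + (1 - l) * measure \<mu> (Xj k j)"
  define b where "b = 2 / real (k - 1)"
  have a0: "0 \<le> a" unfolding a_def using l by simp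
  have ab: "a \<le> b"
  proof -
    have "measure lborel (Xj k j) = 2 * \<delta>" unfolding XjE using dpos by simp
    then have "measure lborel (Xj k j) / (2*pi) = 1 / real k" unfolding \<delta>_def by simp
    then have "a = l * (1 / real k) + (1 - l) * measure \<mu> (Xj k j)" unfolding a_def by simp
    also have "\<dots> \<le> 1 * (1 / real k) + 1 * (1 / real (k - 1))"
      using l mj by (intro add_mono mult_mono) auto
    also have "\<dots> \<le> 1 / real (k - 1) + 1 / real (k - 1)"
    proof -
      have "real (k - 1) \<le> real k" by simp
      moreover have "real (k - 1) > 0" using k by simp
      ultimately have "1 / real k \<le> 1 / real (k - 1)" by (intro divide_left_mono) auto
      then show ?thesis by simp
    qed
    finally show ?thesis unfolding b_def by simp
  qed
  have c1: "cos \<delta> < 1" by (rule cos_lt_1[OF dpos dpi])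
  have main: "l + u - 1 \<le> a + 2 * sqrt a + (2 / (1 - cos \<delta>)) / real N" if N: "N > 0" for N :: nat
  proof -
    have I: "l * Re (qform N (cstate N \<theta>0) (canonical_phase (Xj k j))) \<le> a + 2 * sqrt a + (1 - u)"
      unfolding a_def
      by (rule main_ineq[OF obs m1 m2 T1 T2 nu l u Xs cstate_norm[OF N]])
    have C: "Re (qform N (cstate N \<theta>0) (canonical_phase (Xj k j))) \<ge> 1 - 2 / (real N * (1 - cos \<delta>))"
      unfolding XjE by (rule phase_conc[OF dpos dpi t1 t2 N])
    have "l * (1 - 2 / (real N * (1 - cos \<delta>))) \<le> l * Re (qform N (cstate N \<theta>0) (canonical_phase (Xj k j)))"
      using C l by (intro mult_left_mono) auto
    then have "l - l * (2 / (real N * (1 - cos \<delta>))) \<le> a + 2 * sqrt a + (1 - u)"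
      using I by (simp add: algebra_simps)
    moreover have "l * (2 / (real N * (1 - cos \<delta>))) \<le> 1 * (2 / (real N * (1 - cos \<delta>)))"
      using l c1 N by (intro mult_right_mono) auto
    moreover have "2 / (real N * (1 - cos \<delta>)) = (2 / (1 - cos \<delta>)) / real N" by simp
    ultimately show ?thesis by linarith
  qed
  have "l + u - 1 \<le> a + 2 * sqrt a" by (rule lim_N[OF main]) simp
  also have "\<dots> \<le> b + 2 * sqrt b" using ab a0 by (intro add_mono mult_left_mono real_sqrt_le_mono) auto
  finally show ?thesis unfolding b_def .
qed

lemma eps_contra:
  fixes e :: real
  assumes e: "e > 0" and h: "\<And>k::nat. k \<ge> 2 \<Longrightarrow> e \<le> 2 / real (k - 1) + 2 * sqrt (2 / real (k - 1))"
  shows False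
proof -
  obtain M :: nat where M: "real M > 18 / e\<^sup>2 + 2" using reals_Archimedean2 by blast
  let ?k = "M + 1"
  have Mg: "real M \<ge> 2" using M e by (smt (verit) divide_nonneg_pos zero_less_power)
  have k2: "?k \<ge> 2" using Mg by linarith
  have km: "real (?k - 1) = real M" by simp
  let ?b = "2 / real M"
  have b0: "0 \<le> ?b" by simp
  have b1: "?b \<le> 1" using Mg by simp
  have bs: "?b \<le> sqrt ?b"
  proof -
    have "?b * ?b \<le> 1 * ?b" using b0 b1 by (intro mult_right_mono) auto
    then have "?b\<^sup>2 \<le> ?b" by (simp add: power2_eq_square)
    then have "sqrt (?b\<^sup>2) \<le> sqrt ?b" by (rule real_sqrt_le_mono)
    then show ?thesis using b0 by simp
  qed
  have "e \<le> ?b + 2 * sqrt ?b" using h[OF k2] unfolding km .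
  also have "\<dots> \<le> 3 * sqrt ?b" using bs by simp
  finally have "e \<le> 3 * sqrt ?b" .
  then have "e\<^sup>2 \<le> (3 * sqrt ?b)\<^sup>2" using e by (intro power_mono) auto
  also have "\<dots> = 9 * ?b" using b0 by (simp add: power_mult_distrib)
  finally have "e\<^sup>2 \<le> 18 / real M" by simp
  then have "e\<^sup>2 * real M \<le> 18" using Mg by (simp add: field_simps)
  moreover have "18 / e\<^sup>2 < real M" using M by simp
  then have "18 < e\<^sup>2 * real M" using e by (simp add: field_simps)
  ultimately show False by simp
qed

lemma region_sub:
  assumes "(l, u) \<in> jm_region phase_space number_space canonical_phase number_obs"
  shows "l + u \<le> 1"
proof -
  from assms obtain T1 T2 where l: "0 \<le> l" "l \<le> 1" and u: "0 \<le> u" "u \<le> 1"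
    and t1: "trivial_observable phase_space T1" and t2: "trivial_observable number_space T2"
    and jm: "jointly_measurable phase_space number_space (mix l canonical_phase T1) (mix u number_obs T2)"
    unfolding jm_region_def by auto
  from t1 obtain \<mu> where mu: "prob_space \<mu>" "sets \<mu> = sets phase_space"
    and T1: "\<And>X. X \<in> sets phase_space \<Longrightarrow> T1 X = (\<lambda>m n. of_real (measure \<mu> X) * idmat m n)"
    unfolding trivial_observable_def by auto
  from t2 obtain \<nu> where nu: "prob_space \<nu>" "sets \<nu> = sets number_space"
    and T2: "\<And>Y. Y \<in> sets number_space \<Longrightarrow> T2 Y = (\<lambda>m n. of_real (measure \<nu> Y) * idmat m n)"
    unfolding trivial_observable_def by auto
  from jm obtain G where obs: "is_observable (phase_space \<Otimes>\<^sub>M number_space) G"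
    and m1: "\<And>X. X \<in> sets phase_space \<Longrightarrow> G (X \<times> space number_space) = mix l canonical_phase T1 X"
    and m2: "\<And>Y. Y \<in> sets number_space \<Longrightarrow> G (space phase_space \<times> Y) = mix u number_obs T2 Y"
    unfolding jointly_measurable_def by auto
  show ?thesis
  proof (rule ccontr)
    assume "\<not> ?thesis"
    then have e: "l + u - 1 > 0" by simp
    show False
      by (rule eps_contra[OF e k_bound[OF obs m1 m2 T1 T2 mu nu l u]])
  qed
qed

theorem theorem3:
  shows "maximally_incompatible phase_space number_space canonical_phase number_obs"
  unfolding maximally_incompatible_def
proof (intro set_eqI iffI)
  fix p :: "real \<times> real"
  obtain l u where p: "p = (l, u)" by (cases p)
  {
    assume "p \<in> jm_region phase_space number_space canonical_phase number_obs"
    then have r: "(l, u) \<in> jm_region phase_space number_space canonical_phase number_obs" using p by simp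
    have "l + u \<le> 1" by (rule region_sub[OF r])
    moreover have "l \<in> {0..1}" "u \<in> {0..1}" using r unfolding jm_region_def by auto
    ultimately show "p \<in> {(l, u). l \<in> {0..1} \<and> u \<in> {0..1} \<and> l + u \<le> 1}" using p by simp
  }
  {
    assume "p \<in> {(l, u). l \<in> {0..1} \<and> u \<in> {0..1} \<and> l + u \<le> 1}"
    then have "0 \<le> l" "l \<le> 1" "0 \<le> u" "u \<le> 1" "l + u \<le> 1" using p by auto
    then show "p \<in> jm_region phase_space number_space canonical_phase number_obs"
      using region_sup p by simp
  }
qed

end
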